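(* Let $\Sigma$ be an oriented graph on $n$ vertices with skew adjacency matrix $S$ and walk-matrix $W=W(\Sigma)$ satisfying $\det W\neq 0$, let $P$ be a permutation matrix with $P^{\mathrm T}SP=S^{\mathrm T}$, let $p$ be an odd prime, and for $\lambda\in\{1,-1\}$ let $V_\lambda\subset\mathbb{F}_p^n$ denote the eigenspace of $P$ (viewed over $\mathbb{F}_p$) for the eigenvalue $\lambda$. If $n$ is even then $\dim V_1=\dim V_{-1}=n/2$; if $n$ is odd then $\dim V_1=(n+1)/2$ and $\dim V_{-1}=(n-1)/2$.
   Context: The skew adjacency matrix $S=(S_{ij})$ of an oriented graph on vertices $v_1,\dots,v_n$ has $S_{ij}=1$ if $(v_i,v_j)$ is a directed edge, $S_{ij}=-1$ if $(v_j,v_i)$ is a directed edge, and $S_{ij}=0$ otherwise. The walk-matrix is $W(\Sigma)=[e,Se,\ldots,S^{n-1}e]$ with $e$ the all-ones vector. *)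

theory Defs
  imports "Jordan_Normal_Form.Jordan_Normal_Form_Uniqueness" "Berlekamp_Zassenhaus.Finite_Field"
begin

definition oriented_graph :: "nat \<Rightarrow> (nat \<Rightarrow> nat \<Rightarrow> bool) \<Rightarrow> bool" where
  "oriented_graph n E \<longleftrightarrow>
     (\<forall>i j. E i j \<longrightarrow> i < n \<and> j < n) \<and>
     (\<forall>i. \<not> E i i) \<and>
     (\<forall>i j. E i j \<longrightarrow> \<not> E j i)"

definition skew_adj :: "nat \<Rightarrow> (nat \<Rightarrow> nat \<Rightarrow> bool) \<Rightarrow> int mat" where
  "skew_adj n E = mat n n (\<lambda>(i, j). if E i j then 1 else if E j i then -1 else 0)"

definition walk_matrix :: "nat \<Rightarrow> int mat \<Rightarrow> int mat" where
  "walk_matrix n S = mat n n (\<lambda>(i, j). ((S ^\<^sub>m j) *\<^sub>v (vec n (\<lambda>_. 1))) $ i)"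

definition permutation_matrix :: "nat \<Rightarrow> int mat \<Rightarrow> bool" where
  "permutation_matrix n P \<longleftrightarrow>
     (\<exists>\<sigma>. \<sigma> permutes {..<n} \<and> P = mat n n (\<lambda>(i, j). if i = \<sigma> j then 1 else 0))"

end

theory Submission imports Defs begin

definition pm :: "nat \<Rightarrow> (nat \<Rightarrow> nat) \<Rightarrow> 'a::semiring_1 mat" where
  "pm n \<sigma> = mat n n (\<lambda>(i,j). if i = \<sigma> j then 1 else 0)"

lemma pm_carrier[simp]: "pm n \<sigma> \<in> carrier_mat n n" "dim_row (pm n \<sigma>) = n" "dim_col (pm n \<sigma>) = n"
  by (auto simp: pm_def)

lemma pm_index: "i < n \<Longrightarrow> j < n \<Longrightarrow> pm n \<sigma> $$ (i,j) = (if i = \<sigma> j then 1 else 0)"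
  by (simp add: pm_def)

lemma pm_mult:
  assumes s: "\<sigma> permutes {..<n}" and t: "\<tau> permutes {..<n}"
  shows "(pm n \<sigma> * pm n \<tau> :: 'a::semiring_1 mat) = pm n (\<sigma> \<circ> \<tau>)"
proof (rule eq_matI)
  fix i j assume i: "i < dim_row (pm n (\<sigma> \<circ> \<tau>) :: 'a mat)" and j: "j < dim_col (pm n (\<sigma> \<circ> \<tau>) :: 'a mat)"
  hence i: "i < n" and j: "j < n" by auto
  have tj: "\<tau> j < n" using permutes_in_image[OF t] j by auto
  have "(pm n \<sigma> * pm n \<tau> :: 'a mat) $$ (i,j) = (\<Sum>k\<in>{0..<n}. (if i = \<sigma> k then 1 else 0) * (if k = \<tau> j then 1 else 0) :: 'a)"
    using i j by (simp add: index_mult_mat scalar_prod_def pm_def)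
  also have "\<dots> = (\<Sum>k\<in>{0..<n}. if k = \<tau> j then (if i = \<sigma> k then 1 else 0) else 0 :: 'a)"
    by (rule sum.cong, auto)
  also have "\<dots> = (if i = \<sigma> (\<tau> j) then 1 else 0)"
    using tj by (simp add: sum.delta')
  finally show "(pm n \<sigma> * pm n \<tau> :: 'a mat) $$ (i,j) = pm n (\<sigma> \<circ> \<tau>) $$ (i,j)"
    using i j by (simp add: pm_def)
qed auto

lemma pm_id: "pm n id = 1\<^sub>m n"
  by (rule eq_matI, auto simp: pm_def)

lemma pm_transpose: assumes s: "\<sigma> permutes {..<n}"
  shows "transpose_mat (pm n \<sigma>) = pm n (Hilbert_Choice.inv \<sigma>)"
  by (rule eq_matI, auto simp: pm_def permutes_inv_eq[OF s] permutes_inverses[OF s])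

lemma pm_ones: assumes s: "\<sigma> permutes {..<n}"
  shows "(pm n \<sigma> :: 'a::semiring_1 mat) *\<^sub>v vec n (\<lambda>_. 1) = vec n (\<lambda>_. 1)"
proof (rule eq_vecI)
  fix i assume "i < dim_vec (vec n (\<lambda>_. 1::'a))"
  hence i: "i < n" by simp
  have ii: "Hilbert_Choice.inv \<sigma> i < n" using permutes_in_image[OF permutes_inv[OF s]] i by auto
  have "((pm n \<sigma> :: 'a mat) *\<^sub>v vec n (\<lambda>_. 1)) $ i = (\<Sum>k\<in>{0..<n}. (if i = \<sigma> k then 1 else 0) :: 'a)"
    using i by (simp add: mult_mat_vec_def scalar_prod_def pm_def)
  also have "\<dots> = (\<Sum>k\<in>{0..<n}. (if k = Hilbert_Choice.inv \<sigma> i then 1 else 0) :: 'a)"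
    by (rule sum.cong, simp, metis permutes_inverses[OF s])
  also have "\<dots> = 1" using ii by simp
  finally show "((pm n \<sigma> :: 'a mat) *\<^sub>v vec n (\<lambda>_. 1)) $ i = vec n (\<lambda>_. 1) $ i" using i by simp
qed auto


lemma skew_transpose: assumes g: "oriented_graph n E"
  shows "transpose_mat (skew_adj n E) = (-1) \<cdot>\<^sub>m skew_adj n E"
  using g unfolding oriented_graph_def skew_adj_def
  by (intro eq_matI, auto)

lemma skew_carrier[simp]: "skew_adj n E \<in> carrier_mat n n"
  by (simp add: skew_adj_def)

lemma conj_step:
  fixes T P A B :: "'a::semiring_1 mat"
  assumes T: "T \<in> carrier_mat n n" and P: "P \<in> carrier_mat n n" and A: "A \<in> carrier_mat n n"
    and B: "B \<in> carrier_mat n n" and PT: "P * T = 1\<^sub>m n"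
  shows "T * (A * B) * P = (T * A * P) * (T * B * P)"
proof -
  have "(T * A * P) * (T * B * P) = T * A * (P * T) * B * P"
    using T P A B by (simp add: assoc_mult_mat[of _ n n _ n _ n])
  also have "\<dots> = T * A * 1\<^sub>m n * B * P" by (simp add: PT)
  also have "T * A * 1\<^sub>m n = T * A" using right_mult_one_mat[of "T*A" n n] T A by auto
  also have "T * A * B = T * (A * B)" using T A B by (simp add: assoc_mult_mat[of T n n A n B n])
  finally show ?thesis by simp
qed

lemma conj_pow:
  fixes T P S :: "'a::comm_ring_1 mat"
  assumes T: "T \<in> carrier_mat n n" and P: "P \<in> carrier_mat n n" and S: "S \<in> carrier_mat n n"
    and PT: "P * T = 1\<^sub>m n" and TP: "T * P = 1\<^sub>m n" and TSP: "T * S * P = (-1) \<cdot>\<^sub>m S"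
  shows "T * (S ^\<^sub>m k) * P = (-1)^k \<cdot>\<^sub>m (S ^\<^sub>m k)"
proof (induction k)
  case 0
  have S0: "S ^\<^sub>m 0 = 1\<^sub>m n" using S by (simp add: carrier_matD)
  have "T * (S ^\<^sub>m 0) * P = 1\<^sub>m n" unfolding S0 using T P S TP by (simp add: carrier_matD)
  moreover have "(-1::'a)^0 \<cdot>\<^sub>m S ^\<^sub>m 0 = 1\<^sub>m n" unfolding S0 by (auto intro!: eq_matI)
  ultimately show ?case by (simp only:)
next
  case (Suc k)
  have "T * (S ^\<^sub>m Suc k) * P = T * (S ^\<^sub>m k * S) * P" by simp
  also have "\<dots> = (T * S ^\<^sub>m k * P) * (T * S * P)"
    by (rule conj_step[OF T P _ S PT], simp add: S)
  also have "\<dots> = ((-1)^k \<cdot>\<^sub>m (S ^\<^sub>m k)) * ((-1) \<cdot>\<^sub>m S)" using Suc TSP by simp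
  also have "\<dots> = (-1)^Suc k \<cdot>\<^sub>m (S ^\<^sub>m Suc k)"
    using S by (simp add: mult_smult_assoc_mat[of _ n n] mult_smult_distrib[of _ n n], intro eq_matI, auto)
  finally show ?case .
qed

definition Dm :: "nat \<Rightarrow> int mat" where
  "Dm n = mat n n (\<lambda>(i,j). if i = j then (-1)^j else 0)"

lemma Dm_carrier[simp]: "Dm n \<in> carrier_mat n n" "dim_row (Dm n) = n" "dim_col (Dm n) = n" by (auto simp: Dm_def)

lemma Dm_sq: "Dm n * Dm n = 1\<^sub>m n"
proof (rule eq_matI)
  fix i j assume "i < dim_row (1\<^sub>m n :: int mat)" "j < dim_col (1\<^sub>m n :: int mat)"
  hence i: "i < n" and j: "j < n" by auto
  have "(Dm n * Dm n) $$ (i,j) = (\<Sum>k\<in>{0..<n}. (if i = k then (-1)^k else 0) * (if k = j then (-1)^j else 0) :: int)"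
    using i j by (simp add: scalar_prod_def Dm_def)
  also have "\<dots> = (\<Sum>k\<in>{0..<n}. if k = j then (if i = j then 1 else 0) else 0 :: int)"
    by (rule sum.cong, auto)
  also have "\<dots> = 1\<^sub>m n $$ (i,j)" using i j by simp
  finally show "(Dm n * Dm n) $$ (i,j) = 1\<^sub>m n $$ (i,j)" .
qed auto

lemma walk_D:
  fixes T P S :: "int mat"
  assumes T: "T \<in> carrier_mat n n" and P: "P \<in> carrier_mat n n" and S: "S \<in> carrier_mat n n"
    and PT: "P * T = 1\<^sub>m n" and TP: "T * P = 1\<^sub>m n" and TSP: "T * S * P = (-1) \<cdot>\<^sub>m S"
    and Pe: "P *\<^sub>v vec n (\<lambda>_. 1) = vec n (\<lambda>_. 1)"
  shows "T * walk_matrix n S = walk_matrix n S * Dm n"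
proof (rule eq_matI)
  let ?e = "vec n (\<lambda>_. 1::int)"
  let ?W = "walk_matrix n S"
  fix i j assume "i < dim_row (?W * Dm n)" "j < dim_col (?W * Dm n)"
  hence i: "i < n" and j: "j < n" by (auto simp: walk_matrix_def)
  have colW: "col ?W j = S ^\<^sub>m j *\<^sub>v ?e"
    using j S by (intro eq_vecI, auto simp: walk_matrix_def)
  have "(T * ?W) $$ (i,j) = (T *\<^sub>v (S ^\<^sub>m j *\<^sub>v ?e)) $ i"
    using i j T colW by (simp add: walk_matrix_def)
  also have "T *\<^sub>v (S ^\<^sub>m j *\<^sub>v ?e) = (T * S ^\<^sub>m j * P) *\<^sub>v ?e"
  proof -
    have Sj: "S ^\<^sub>m j \<in> carrier_mat n n" using S by simp
    have TS: "T * S ^\<^sub>m j \<in> carrier_mat n n" using T Sj by simp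
    have "(T * S ^\<^sub>m j * P) *\<^sub>v ?e = (T * S ^\<^sub>m j) *\<^sub>v (P *\<^sub>v ?e)"
      using assoc_mult_mat_vec[OF TS P, of ?e] by simp
    also have "\<dots> = (T * S ^\<^sub>m j) *\<^sub>v ?e" using Pe by simp
    also have "\<dots> = T *\<^sub>v (S ^\<^sub>m j *\<^sub>v ?e)" using assoc_mult_mat_vec[OF T Sj, of ?e] by simp
    finally show ?thesis by simp
  qed
  also have "\<dots> = ((-1)^j \<cdot>\<^sub>m (S ^\<^sub>m j)) *\<^sub>v ?e" using conj_pow[OF T P S PT TP TSP] by simp
  also have "(\<dots>) $ i = (-1)^j * ?W $$ (i,j)"
    using i j S by (simp add: walk_matrix_def scalar_prod_def sum_distrib_left)
  also have "\<dots> = (?W * Dm n) $$ (i,j)"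
  proof -
    have "(?W * Dm n) $$ (i,j) = (\<Sum>k\<in>{0..<n}. ?W $$ (i,k) * (if k = j then (-1)^j else 0))"
      using i j by (simp add: scalar_prod_def Dm_def walk_matrix_def)
    also have "\<dots> = ?W $$ (i,j) * (-1)^j" using j by (simp add: if_distrib sum.delta' cong: if_cong)
    finally show ?thesis by simp
  qed
  finally show "(T * ?W) $$ (i,j) = (?W * Dm n) $$ (i,j)" .
qed (insert T, auto simp: walk_matrix_def)


definition tr :: "'a::comm_ring_1 mat \<Rightarrow> 'a" where
  "tr A = (\<Sum>i<dim_row A. A $$ (i,i))"

lemma tr_comm: assumes A: "A \<in> carrier_mat n m" and B: "B \<in> carrier_mat m n"
  shows "tr (A * B) = tr (B * A)"
proof -
  have "tr (A * B) = (\<Sum>i<n. \<Sum>k<m. A $$ (i,k) * B $$ (k,i))"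
    using A B by (simp add: tr_def scalar_prod_def atLeast0LessThan)
  also have "\<dots> = (\<Sum>k<m. \<Sum>i<n. B $$ (k,i) * A $$ (i,k))"
    by (subst sum.swap, simp add: mult.commute)
  also have "\<dots> = tr (B * A)"
    using A B by (simp add: tr_def scalar_prod_def atLeast0LessThan)
  finally show ?thesis .
qed

lemma tr_smult_one: assumes T: "T \<in> carrier_mat n n"
  shows "tr (T * (d \<cdot>\<^sub>m 1\<^sub>m n)) = d * tr T"
proof -
  have "T * (d \<cdot>\<^sub>m 1\<^sub>m n) = d \<cdot>\<^sub>m (T * 1\<^sub>m n)" using mult_smult_distrib[of T n n "1\<^sub>m n" n d] T by simp
  also have "T * 1\<^sub>m n = T" using T by simp
  finally have "T * (d \<cdot>\<^sub>m 1\<^sub>m n) = d \<cdot>\<^sub>m T" .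
  thus ?thesis using T by (simp add: tr_def sum_distrib_left)
qed

lemma int_facts:
  fixes T W D :: "int mat"
  assumes T: "T \<in> carrier_mat n n" and W: "W \<in> carrier_mat n n" and D: "D \<in> carrier_mat n n"
    and DD: "D * D = 1\<^sub>m n" and TW: "T * W = W * D" and dW: "det W \<noteq> 0"
  shows "T * T = 1\<^sub>m n" "tr T = tr D"
proof -
  define d where "d = det W"
  define M where "M = adj_mat W"
  have M: "M \<in> carrier_mat n n" and WM: "W * M = d \<cdot>\<^sub>m 1\<^sub>m n" and MW: "M * W = d \<cdot>\<^sub>m 1\<^sub>m n"
    using adj_mat[OF W] unfolding M_def d_def by auto
  have "T * T * W = T * (T * W)" using T W by simp
  also have "\<dots> = T * (W * D)" using TW by simp
  also have "\<dots> = (T * W) * D" using T W D by simp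
  also have "\<dots> = (W * D) * D" by (simp only: TW)
  also have "\<dots> = W * (D * D)" by (rule assoc_mult_mat[OF W D D])
  also have "\<dots> = W" using DD W by simp
  finally have TTW: "T * T * W = W" .
  have TT: "T * T \<in> carrier_mat n n" using T by simp
  have "T * T * (W * M) = (T * T * W) * M" by (rule assoc_mult_mat[OF TT W M, symmetric])
  hence "T * T * (W * M) = W * M" unfolding TTW .
  hence "T * T * (d \<cdot>\<^sub>m 1\<^sub>m n) = d \<cdot>\<^sub>m 1\<^sub>m n" unfolding WM .
  moreover have "T * T * (d \<cdot>\<^sub>m 1\<^sub>m n) = d \<cdot>\<^sub>m (T * T * 1\<^sub>m n)"
    by (rule mult_smult_distrib, insert T, auto)
  moreover have "T * T * 1\<^sub>m n = T * T" using T by simp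
  ultimately have eq: "d \<cdot>\<^sub>m (T * T) = d \<cdot>\<^sub>m 1\<^sub>m n" by simp
  show "T * T = 1\<^sub>m n"
  proof (rule eq_matI)
    fix i j assume "i < dim_row (1\<^sub>m n :: int mat)" "j < dim_col (1\<^sub>m n :: int mat)"
    hence ij: "i < n" "j < n" by auto
    from arg_cong[OF eq, of "\<lambda>A. A $$ (i,j)"] ij T
    have "d * (T * T) $$ (i,j) = d * 1\<^sub>m n $$ (i,j)" by simp
    thus "(T * T) $$ (i,j) = 1\<^sub>m n $$ (i,j)" using dW unfolding d_def by simp
  qed (insert T, auto)
  have "d * tr T = tr (T * (W * M))" using tr_smult_one[OF T] WM by simp
  also have "T * (W * M) = W * (D * M)"
  proof -
    have "T * (W * M) = (T * W) * M" by (rule assoc_mult_mat[OF T W M, symmetric])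
    also have "\<dots> = W * D * M" by (simp only: TW)
    also have "\<dots> = W * (D * M)" by (rule assoc_mult_mat[OF W D M])
    finally show ?thesis .
  qed
  also have "tr (W * (D * M)) = tr ((D * M) * W)" using W D M by (intro tr_comm[of _ n n], auto)
  also have "(D * M) * W = D * (d \<cdot>\<^sub>m 1\<^sub>m n)" unfolding assoc_mult_mat[OF D M W] MW ..
  also have "tr \<dots> = d * tr D" using tr_smult_one[OF D] .
  finally show "tr T = tr D" using dW unfolding d_def by simp
qed


lemma jordan_matrix_diag:
  "jordan_matrix (map (\<lambda>a. (1::nat, a)) as) =
     mat (length as) (length as) (\<lambda>(i,j). if i = j then as ! i else (0::'a::{zero,one}))"
proof (induction as)
  case Nil
  show ?case by (auto simp: jordan_matrix_def intro!: eq_matI)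
next
  case (Cons a as)
  have fst: "sum_list (map fst (map (\<lambda>a. (1::nat, a)) as)) = length as"
    by (induction as, auto)
  show ?case unfolding list.map jordan_matrix_Cons fst Cons.IH
    by (rule eq_matI, auto simp: nth_Cons')
qed

lemma dim_gen_diag:
  "(\<Sum> n \<leftarrow> map fst [(n, e)\<leftarrow>map (\<lambda>i. (1::nat, f i)) xs . e = ev]. min 1 n) =
    length (filter (\<lambda>i. f i = ev) xs)"
  by (induction xs, auto)

definition ind :: "bool \<Rightarrow> 'a::field" where "ind b = (if b then 1 else 0)"

lemma sum_two_delta:
  fixes n i k :: nat
  assumes i: "i < n" and k: "k < n"
  shows "(\<Sum>r\<in>{0..<n}. (c * ind (r = i) + c' * ind (r = k)) * g r) = c * g i + c' * (g k :: 'a::field)"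
proof -
  have "(\<Sum>r\<in>{0..<n}. (c * ind (r = i) + c' * ind (r = k)) * g r)
     = (\<Sum>r\<in>{0..<n}. (if r = i then c * g i else 0)) + (\<Sum>r\<in>{0..<n}. (if r = k then c' * g k else 0))"
    by (subst sum.distrib[symmetric], rule sum.cong, auto simp: ind_def algebra_simps)
  also have "(\<Sum>r\<in>{0..<n}. (if r = i then c * g i else 0)) = c * g i"
    by (subst sum.delta[OF finite_atLeastLessThan], simp add: i)
  also have "(\<Sum>r\<in>{0..<n}. (if r = k then c' * g k else 0)) = c' * g k"
    by (subst sum.delta[OF finite_atLeastLessThan], simp add: k)
  finally show ?thesis .
qed

locale invol =
  fixes n :: nat and \<sigma> :: "nat \<Rightarrow> nat"
  assumes perm: "\<sigma> permutes {..<n}" and inv: "\<And>i. i < n \<Longrightarrow> \<sigma> (\<sigma> i) = i"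
begin

lemma sig_lt: "i < n \<Longrightarrow> \<sigma> i < n"
  using permutes_in_image[OF perm] by auto

definition qa :: "nat \<Rightarrow> 'a::field" where "qa i = (if \<sigma> i = i then 1 else if i < \<sigma> i then 1 else -1)"
definition qb :: "nat \<Rightarrow> 'a::field" where "qb i = (if \<sigma> i = i then 0 else 1)"
definition qc :: "nat \<Rightarrow> 'a::field" where "qc i = (if \<sigma> i = i then 1 else if i < \<sigma> i then inverse 2 else - inverse 2)"
definition qd :: "nat \<Rightarrow> 'a::field" where "qd i = (if \<sigma> i = i then 0 else inverse 2)"
definition dd :: "nat \<Rightarrow> 'a::field" where "dd i = (if \<sigma> i < i then -1 else 1)"

definition Qm :: "'a::field mat" where "Qm = mat n n (\<lambda>(r,i). qa i * ind (r = i) + qb i * ind (r = \<sigma> i))"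
definition Qi :: "'a::field mat" where "Qi = mat n n (\<lambda>(i,r). qc i * ind (r = i) + qd i * ind (r = \<sigma> i))"
definition DG :: "'a::field mat" where "DG = jordan_matrix (map (\<lambda>i. (1, dd i)) [0..<n])"

lemma DG_eq: "DG = mat n n (\<lambda>(i,j). if i = j then dd i else 0)"
  unfolding DG_def map_map[symmetric, of "\<lambda>a. (1, a)" dd, unfolded o_def] jordan_matrix_diag
  by (rule eq_matI, auto)

lemma carriers[simp]: "Qm \<in> carrier_mat n n" "Qi \<in> carrier_mat n n" "DG \<in> carrier_mat n n"
  "dim_row Qm = n" "dim_col Qm = n" "dim_row Qi = n" "dim_col Qi = n" "dim_row DG = n" "dim_col DG = n"
  by (auto simp: Qm_def Qi_def DG_eq)

lemma QiQ: assumes two: "(2::'a::field) \<noteq> 0" shows "(Qi * Qm :: 'a mat) = 1\<^sub>m n"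
proof (rule eq_matI)
  fix i j assume "i < dim_row (1\<^sub>m n :: 'a mat)" "j < dim_col (1\<^sub>m n :: 'a mat)"
  hence i: "i < n" and j: "j < n" by auto
  have si: "\<sigma> i < n" and sj: "\<sigma> j < n" using sig_lt i j by auto
  have "(Qi * Qm :: 'a mat) $$ (i,j) = (\<Sum>r\<in>{0..<n}. (qc i * ind (r = i) + qd i * ind (r = \<sigma> i)) * Qm $$ (r,j))"
    using i j by (simp add: Qi_def scalar_prod_def)
  also have "\<dots> = qc i * Qm $$ (i,j) + qd i * Qm $$ (\<sigma> i, j)"
    by (rule sum_two_delta[OF i si])
  also have "\<dots> = qc i * (qa j * ind (i = j) + qb j * ind (i = \<sigma> j))
      + qd i * (qa j * ind (\<sigma> i = j) + qb j * ind (\<sigma> i = \<sigma> j))"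
    using i j si by (simp add: Qm_def)
  also have "\<dots> = 1\<^sub>m n $$ (i,j)"
  proof -
    have h: "inverse 2 + inverse (2::'a) = 1" using two by (simp add: field_simps)
    have ii: "\<sigma> (\<sigma> i) = i" "\<sigma> (\<sigma> j) = j" using inv i j by auto
    show ?thesis using i j h ii
      by (cases "\<sigma> i = i"; cases "\<sigma> j = j"; cases "i < \<sigma> i"; cases "j < \<sigma> j"; cases "i = j"; cases "i = \<sigma> j";
          auto simp: qa_def qb_def qc_def qd_def ind_def)
  qed
  finally show "(Qi * Qm :: 'a mat) $$ (i,j) = 1\<^sub>m n $$ (i,j)" .
qed auto

lemma PQ: "(pm n \<sigma> * Qm :: 'a::field mat) = Qm * DG"
proof (rule eq_matI)
  fix r i assume "r < dim_row (Qm * DG :: 'a mat)" "i < dim_col (Qm * DG :: 'a mat)"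
  hence r: "r < n" and i: "i < n" by auto
  have sr: "\<sigma> r < n" and si: "\<sigma> i < n" using sig_lt r i by auto
  have "(pm n \<sigma> * Qm :: 'a mat) $$ (r,i) = (\<Sum>k\<in>{0..<n}. (0 * ind (k = r) + 1 * ind (k = \<sigma> r)) * Qm $$ (k,i) :: 'a)"
    using r i inv by (auto simp: pm_def scalar_prod_def ind_def intro!: sum.cong)
  also have "\<dots> = Qm $$ (\<sigma> r, i)" using sum_two_delta[OF r sr, of 0 1 "\<lambda>k. Qm $$ (k,i)"] by simp
  also have "\<dots> = (Qm * DG) $$ (r,i)"
  proof -
    have "(Qm * DG :: 'a mat) $$ (r,i) = (\<Sum>k\<in>{0..<n}. (0 * ind (k = r) + dd i * ind (k = i)) * Qm $$ (r,k) :: 'a)"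
      using r i by (auto simp: DG_eq scalar_prod_def ind_def mult.commute intro!: sum.cong)
    also have "\<dots> = dd i * Qm $$ (r, i)" using sum_two_delta[OF r i, of 0 "dd i" "\<lambda>k. Qm $$ (r,k)"] by simp
    finally have R: "(Qm * DG :: 'a mat) $$ (r,i) = dd i * Qm $$ (r, i)" .
    have ii: "\<sigma> (\<sigma> i) = i" "\<sigma> (\<sigma> r) = r" using inv i r by auto
    have inj: "\<sigma> r = \<sigma> i \<longleftrightarrow> r = i" "\<sigma> r = i \<longleftrightarrow> r = \<sigma> i" using ii by metis+
    show ?thesis unfolding R using r i sr
      by (cases "\<sigma> i = i"; cases "i < \<sigma> i"; auto simp: Qm_def qa_def qb_def dd_def ind_def inj)
  qed
  finally show "(pm n \<sigma> * Qm :: 'a mat) $$ (r,i) = (Qm * DG) $$ (r,i)" .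
qed auto

lemma similar: assumes two: "(2::'a::field) \<noteq> 0" shows "similar_mat (pm n \<sigma> :: 'a mat) DG"
proof -
  have QQi: "(Qm * Qi :: 'a mat) = 1\<^sub>m n"
    by (rule mat_mult_left_right_inverse[OF _ _ QiQ[OF two]], auto)
  have "(pm n \<sigma> :: 'a mat) = pm n \<sigma> * (Qm * Qi)" unfolding QQi by simp
  also have "\<dots> = (pm n \<sigma> * Qm) * Qi" by (rule assoc_mult_mat[symmetric], auto)
  also have "\<dots> = Qm * DG * Qi" unfolding PQ ..
  finally show ?thesis
    by (intro similar_matI[of _ _ Qm Qi n] QQi QiQ[OF two], auto)
qed

lemma dims: assumes two: "(2::'a::field) \<noteq> 0"
  shows "dim_gen_eigenspace (pm n \<sigma> :: 'a mat) ev 1 = length (filter (\<lambda>i. dd i = ev) [0..<n])"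
  unfolding dim_gen_eigenspace_similar[OF similar[OF two]] DG_def dim_gen_eigenspace_jordan_matrix
  by (rule dim_gen_diag)

end


context invol
begin

lemma count: assumes F: "card {i. i < n \<and> \<sigma> i = i} = n mod 2"
  shows "card {i. i < n \<and> \<sigma> i < i} = n div 2"
proof -
  define A where "A = {i. i < n \<and> \<sigma> i < i}"
  define B where "B = {i. i < n \<and> i < \<sigma> i}"
  define C where "C = {i. i < n \<and> \<sigma> i = i}"
  have img: "\<sigma> ` A = B"
  proof
    show "\<sigma> ` A \<subseteq> B" unfolding A_def B_def using inv sig_lt by auto
    show "B \<subseteq> \<sigma> ` A"
    proof
      fix j assume j: "j \<in> B"
      hence "\<sigma> j \<in> A" "j = \<sigma> (\<sigma> j)" unfolding A_def B_def using inv sig_lt by auto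
      thus "j \<in> \<sigma> ` A" by blast
    qed
  qed
  have injA: "inj_on \<sigma> A" using permutes_inj[OF perm] by (auto intro: inj_on_subset)
  have cAB: "card B = card A" using card_image[OF injA] img by simp
  have un: "{i. i < n} = A \<union> B \<union> C" unfolding A_def B_def C_def by auto
  have fin: "finite A" "finite B" "finite C" unfolding A_def B_def C_def by auto
  have "n = card (A \<union> B \<union> C)" unfolding un[symmetric] by simp
  also have "\<dots> = card (A \<union> B) + card C"
    by (rule card_Un_disjoint, insert fin, auto simp: A_def B_def C_def)
  also have "card (A \<union> B) = card A + card B"
    by (rule card_Un_disjoint, insert fin, auto simp: A_def B_def)
  finally have "n = 2 * card A + n mod 2" using cAB F unfolding C_def by simp
  thus ?thesis unfolding A_def by presburger
qed

end

lemma length_filter_upt: "length (filter P [0..<n]) = card {i. i < n \<and> P i}"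
  by (simp add: length_filter_conv_card cong: conj_cong)

lemma sum_alt': "(\<Sum>i<n. (-1::int)^i) = (if even n then 0 else 1)"
proof (induction n)
  case (Suc n)
  show ?case by (cases "even n", auto simp: Suc.IH)
qed simp

lemma sum_alt: "(\<Sum>i<n. (-1::int)^i) = int (n mod 2)"
  unfolding sum_alt' by (auto simp: odd_iff_mod_2_eq_one)

theorem corollary2p12:
  fixes n :: nat and E :: "nat \<Rightarrow> nat \<Rightarrow> bool" and P :: "int mat"
  assumes graph: "oriented_graph n E"
    and detW: "det (walk_matrix n (skew_adj n E)) \<noteq> 0"
    and perm: "permutation_matrix n P"
    and PSP: "transpose_mat P * skew_adj n E * P = transpose_mat (skew_adj n E)"
    and odd_p: "CARD('p::prime_card) \<noteq> 2"
  shows "let Pp = map_mat (of_int :: int \<Rightarrow> 'p mod_ring) P in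
         (if even n
          then dim_gen_eigenspace Pp 1 1 = n div 2 \<and> dim_gen_eigenspace Pp (-1) 1 = n div 2
          else dim_gen_eigenspace Pp 1 1 = (n + 1) div 2 \<and> dim_gen_eigenspace Pp (-1) 1 = (n - 1) div 2)"
proof -
  from perm obtain \<sigma> where s: "\<sigma> permutes {..<n}" and Pdef: "P = pm n \<sigma>"
    unfolding permutation_matrix_def pm_def by auto
  define S where "S = skew_adj n E"
  define T where "T = (pm n (Hilbert_Choice.inv \<sigma>) :: int mat)"
  have si: "Hilbert_Choice.inv \<sigma> permutes {..<n}" using permutes_inv[OF s] .
  have TP': "transpose_mat P = T" unfolding Pdef T_def by (rule pm_transpose[OF s])
  have PT: "P * T = 1\<^sub>m n" unfolding Pdef T_def pm_mult[OF s si] permutes_inv_o(1)[OF s] pm_id ..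
  have TP: "T * P = 1\<^sub>m n" unfolding Pdef T_def pm_mult[OF si s] permutes_inv_o(2)[OF s] pm_id ..
  have Pc: "P \<in> carrier_mat n n" and Tc: "T \<in> carrier_mat n n" and Sc: "S \<in> carrier_mat n n"
    unfolding Pdef T_def S_def by auto
  have Pe: "P *\<^sub>v vec n (\<lambda>_. 1) = vec n (\<lambda>_. 1)" unfolding Pdef by (rule pm_ones[OF s])
  have TSP: "T * S * P = (-1) \<cdot>\<^sub>m S"
    using PSP skew_transpose[OF graph] unfolding TP' S_def by simp
  have TW: "T * walk_matrix n S = walk_matrix n S * Dm n"
    by (rule walk_D[OF Tc Pc Sc PT TP TSP Pe])
  have Wc: "walk_matrix n S \<in> carrier_mat n n" by (simp add: walk_matrix_def)
  note IF = int_facts[OF Tc Wc Dm_carrier(1) Dm_sq TW detW[folded S_def]]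
  have invol: "\<sigma> (\<sigma> j) = j" if j: "j < n" for j
  proof -
    let ?i = "Hilbert_Choice.inv \<sigma>"
    have ij: "?i j < n" "?i (?i j) < n" using permutes_in_image[OF si] j by auto
    have "T * T = pm n (?i \<circ> ?i)" unfolding T_def by (rule pm_mult[OF si si])
    hence "pm n (?i \<circ> ?i) = (1\<^sub>m n :: int mat)" using IF(1) by simp
    from arg_cong[OF this, of "\<lambda>A. A $$ (?i (?i j), j)"] j ij
    have "?i (?i j) = j" by (simp add: pm_def split: if_splits)
    hence "\<sigma> j = ?i j" by (metis permutes_inverses(1)[OF s])
    thus ?thesis by (metis permutes_inverses(1)[OF s])
  qed
  interpret invol n \<sigma> using s invol by (unfold_locales, auto)
  have "tr T = (\<Sum>i<n. if i = Hilbert_Choice.inv \<sigma> i then 1 else 0)"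
    unfolding T_def tr_def by (simp add: pm_def)
  also have "\<dots> = (\<Sum>i<n. if \<sigma> i = i then 1 else 0)"
    by (rule sum.cong, simp, metis permutes_inverses[OF s])
  also have "\<dots> = (\<Sum>i\<in>{i\<in>{..<n}. \<sigma> i = i}. 1)"
    by (rule sum.inter_filter[symmetric], simp)
  also have "\<dots> = int (card {i. i < n \<and> \<sigma> i = i})"
  proof -
    have setq: "{i\<in>{..<n}. \<sigma> i = i} = {i. i < n \<and> \<sigma> i = i}" by auto
    show ?thesis unfolding setq by simp
  qed
  finally have "int (card {i. i < n \<and> \<sigma> i = i}) = int (n mod 2)"
    using IF(2) sum_alt[of n] by (simp add: tr_def Dm_def)
  hence cF: "card {i. i < n \<and> \<sigma> i = i} = n mod 2" by linarith
  have cA: "card {i. i < n \<and> \<sigma> i < i} = n div 2" by (rule count[OF cF])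
  have cB: "card {i. i < n \<and> \<not> \<sigma> i < i} = n - n div 2"
  proof -
    have "{i. i < n \<and> \<not> \<sigma> i < i} = {..<n} - {i. i < n \<and> \<sigma> i < i}" by auto
    thus ?thesis using cA by (simp add: card_Diff_subset subset_iff)
  qed
  have two: "(2 :: 'p mod_ring) \<noteq> 0"
  proof
    assume "(2 :: 'p mod_ring) = 0"
    hence "(of_nat 2 :: 'p mod_ring) = 0" by simp
    from of_nat_0_mod_ring_dvd[OF this] have "CARD('p) dvd 2" .
    moreover have "prime (CARD('p))" by (rule prime_card)
    ultimately have "CARD('p) = 2" using dvd_imp_le[of "CARD('p)" 2] prime_gt_1_nat[of "CARD('p)"]
      by linarith
    thus False using odd_p by simp
  qed
  have m1: "(-1 :: 'p mod_ring) \<noteq> 1"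
  proof
    assume "(-1 :: 'p mod_ring) = 1"
    hence "(2 :: 'p mod_ring) = 1 + 1" "1 + (-1 :: 'p mod_ring) = 0" by simp_all
    thus False using two \<open>(-1 :: 'p mod_ring) = 1\<close> by simp
  qed
  have Pp: "map_mat (of_int :: int \<Rightarrow> 'p mod_ring) P = pm n \<sigma>"
    unfolding Pdef by (rule eq_matI, auto simp: pm_def)
  have d1: "dim_gen_eigenspace (pm n \<sigma> :: 'p mod_ring mat) 1 1 = n - n div 2"
  proof -
    have "{i. i < n \<and> (if \<sigma> i < i then -1 else 1) = (1::'p mod_ring)} = {i. i < n \<and> \<not> \<sigma> i < i}"
      using m1 by auto
    thus ?thesis unfolding dims[OF two] length_filter_upt dd_def using cB by simp
  qed
  have d2: "dim_gen_eigenspace (pm n \<sigma> :: 'p mod_ring mat) (-1) 1 = n div 2"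
  proof -
    have "{i. i < n \<and> (if \<sigma> i < i then -1 else 1) = (-1::'p mod_ring)} = {i. i < n \<and> \<sigma> i < i}"
      using m1 not_sym[OF m1] by auto
    thus ?thesis unfolding dims[OF two] length_filter_upt dd_def using cA by simp
  qed
  show ?thesis unfolding Let_def Pp d1 d2 by (auto; presburger)
qed

end
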